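(* Let $X$ be a finite set, $G\le S_X$, $Y=\mathrm{Fol}_r(G)$, $F=N_{S_X}(G)$, and consider the action of $F$ on $Y$ given by $(\lambda_x:x\in X/G)f=(\kappa_x:x\in X/G)$ with $\kappa_x=((\lambda_{yg_y^{-1}})^{g_y})^f$, $y=xf^{-1}$. For $f\in F$, let $\bar f$ be the permutation of $X/G$ induced by $f$ (sending $w\in X/G$ to the representative of the orbit $(wf)G$), $\mathrm{Cyc}(\bar f)$ a complete set of cycle representatives of $\bar f$, and $c(\bar f,x)$ the cycle of $\bar f$ containing $x\in\mathrm{Cyc}(\bar f)$. Then there is a one-to-one correspondence between the set $\mathrm{Fix}(Y,f)=\{\Lambda\in Y:\Lambda f=\Lambda\}$ and the tuples $(c_x:x\in\mathrm{Cyc}(\bar f))$, where each $c_x$ is a short directed cycle of $\Gamma_r(G,f)$ with vertices in $\bigcup_{y\in c(\bar f,x)}C_G(G_y)$. Consequently, the number of orbits of $F$ on $Y$ is $$|Y/F|=\frac{1}{|F|}\sum_{f\in F}|\mathrm{Fix}(Y,f)|=\frac{1}{|F|}\sum_{f\in F}\prod_{x\in\mathrm{Cyc}(\bar f)}\gamma_r(G,f,x),$$ where $\gamma_r(G,f,x)$ is the number of short directed cycles of $\Gamma_r(G,f)$ with vertices in $\bigcup_{y\in c(\bar f,x)}C_G(G_y)$.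
   Context: Permutations act on the right ($xf$ is the image of $x$ under $f$; $fg$ means $f$ first, then $g$); $g^f=f^{-1}gf$. For $G\le S_X$, $xG$ is the orbit of $x$, $G_x$ its stabilizer, $X/G$ a fixed complete set of orbit representatives; $C_G(H)$ is the centralizer and $N_{S_X}(G)$ the normalizer. $\mathrm{Fol}_r(G)=\prod_{x\in X/G}C_G(G_x)$ is the set of rack folders, i.e., tuples $(\lambda_x:x\in X/G)$ with $\lambda_x\in C_G(G_x)$. For every $y\in X$ fix $g_y\in G$ with $xg_y=y$, where $x$ is the representative in $X/G$ of the orbit of $y$. The digraph (possibly with loops) $\Gamma_r(G,f)$, for $f\in N_{S_X}(G)$, has vertex set the formally disjoint union of the sets $C_G(G_x)$, $x\in X/G$; for $x,z\in X/G$, $\kappa_x\in C_G(G_x)$ and $\lambda_z\in C_G(G_z)$, there is a directed edge $\lambda_z\to\kappa_x$ if and only if, with $y=xf^{-1}$, we have $z=yg_y^{-1}$ and $\kappa_x=((\lambda_z)^{g_y})^f$. A directed cycle of $\Gamma_r(G,f)$ is short if it intersects every vertex set $C_G(G_x)$ at most once. *)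

theory Defs
  imports Complex_Main "HOL-Combinatorics.Permutations" "HOL-Library.FuncSet"
begin

text \<open>Permutations of X are functions p with p permutes X
(identity outside X). The paper acts on the right: the image x p of x is
the Isabelle term p x, and the product f g (f first, then g) is g \<circ> f.\<close>

text \<open>Conjugation p^h = h^-1 p h (right action), i.e. x maps to h (p (h^-1 x)).\<close>
definition pconj :: "('a \<Rightarrow> 'a) \<Rightarrow> ('a \<Rightarrow> 'a) \<Rightarrow> ('a \<Rightarrow> 'a)" where
  "pconj p h = h \<circ> p \<circ> inv h"

definition perm_group :: "'a set \<Rightarrow> ('a \<Rightarrow> 'a) set \<Rightarrow> bool" where
  "perm_group X G \<longleftrightarrow> (\<forall>p\<in>G. p permutes X) \<and> id \<in> G
     \<and> (\<forall>p\<in>G. \<forall>q\<in>G. q \<circ> p \<in> G) \<and> (\<forall>p\<in>G. inv p \<in> G)"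

definition orb :: "('a \<Rightarrow> 'a) set \<Rightarrow> 'a \<Rightarrow> 'a set" where
  "orb G x = {p x | p. p \<in> G}"

definition stab :: "('a \<Rightarrow> 'a) set \<Rightarrow> 'a \<Rightarrow> ('a \<Rightarrow> 'a) set" where
  "stab G x = {p \<in> G. p x = x}"

definition centr :: "('a \<Rightarrow> 'a) set \<Rightarrow> ('a \<Rightarrow> 'a) set \<Rightarrow> ('a \<Rightarrow> 'a) set" where
  "centr G H = {c \<in> G. \<forall>h\<in>H. c \<circ> h = h \<circ> c}"

definition normalizer :: "'a set \<Rightarrow> ('a \<Rightarrow> 'a) set \<Rightarrow> ('a \<Rightarrow> 'a) set" where
  "normalizer X G = {f. f permutes X \<and> (\<lambda>h. pconj h f) ` G = G}"

definition orbit_reps :: "'a set \<Rightarrow> ('a \<Rightarrow> 'a) set \<Rightarrow> 'a set \<Rightarrow> bool" where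
  "orbit_reps X G R \<longleftrightarrow> R \<subseteq> X \<and> (\<forall>x\<in>X. \<exists>!r. r \<in> R \<and> r \<in> orb G x)"

definition repr :: "('a \<Rightarrow> 'a) set \<Rightarrow> 'a set \<Rightarrow> 'a \<Rightarrow> 'a" where
  "repr G R y = (THE r. r \<in> R \<and> r \<in> orb G y)"

definition folders :: "('a \<Rightarrow> 'a) set \<Rightarrow> 'a set \<Rightarrow> ('a \<Rightarrow> ('a \<Rightarrow> 'a)) set" where
  "folders G R = (\<Pi>\<^sub>E x\<in>R. centr G (stab G x))"

text \<open>The action of f on folders; gsel y is the fixed g_y.\<close>
definition fol_act :: "'a set \<Rightarrow> ('a \<Rightarrow> ('a \<Rightarrow> 'a)) \<Rightarrow> ('a \<Rightarrow> ('a \<Rightarrow> 'a))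
     \<Rightarrow> ('a \<Rightarrow> 'a) \<Rightarrow> ('a \<Rightarrow> ('a \<Rightarrow> 'a))" where
  "fol_act R gsel \<Lambda> f = (\<lambda>x\<in>R. let y = inv f x in
       pconj (pconj (\<Lambda> (inv (gsel y) y)) (gsel y)) f)"

definition fixset :: "('a \<Rightarrow> 'a) set \<Rightarrow> 'a set \<Rightarrow> ('a \<Rightarrow> ('a \<Rightarrow> 'a))
     \<Rightarrow> ('a \<Rightarrow> 'a) \<Rightarrow> ('a \<Rightarrow> ('a \<Rightarrow> 'a)) set" where
  "fixset G R gsel f = {\<Lambda> \<in> folders G R. fol_act R gsel \<Lambda> f = \<Lambda>}"

definition fol_orbits :: "('a \<Rightarrow> 'a) set \<Rightarrow> 'a set \<Rightarrow> ('a \<Rightarrow> ('a \<Rightarrow> 'a))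
     \<Rightarrow> ('a \<Rightarrow> 'a) set \<Rightarrow> ('a \<Rightarrow> ('a \<Rightarrow> 'a)) set set" where
  "fol_orbits G R gsel F = {{fol_act R gsel \<Lambda> f | f. f \<in> F} | \<Lambda>. \<Lambda> \<in> folders G R}"

definition fbar :: "('a \<Rightarrow> 'a) set \<Rightarrow> 'a set \<Rightarrow> ('a \<Rightarrow> 'a) \<Rightarrow> 'a \<Rightarrow> 'a" where
  "fbar G R f w = repr G R (f w)"

definition fcycle :: "('a \<Rightarrow> 'a) set \<Rightarrow> 'a set \<Rightarrow> ('a \<Rightarrow> 'a) \<Rightarrow> 'a \<Rightarrow> 'a set" where
  "fcycle G R f x = {(fbar G R f ^^ n) x | n. True}"

definition cycle_reps :: "('a \<Rightarrow> 'a) set \<Rightarrow> 'a set \<Rightarrow> ('a \<Rightarrow> 'a) \<Rightarrow> 'a set \<Rightarrow> bool" where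
  "cycle_reps G R f C \<longleftrightarrow> C \<subseteq> R \<and> (\<forall>w\<in>R. \<exists>!c. c \<in> C \<and> w \<in> fcycle G R f c)"

text \<open>The digraph Gamma_r(G,f): vertices are pairs (x, kappa) with x in R and
kappa in C_G(G_x) (formally disjoint union); arcs as a relation.\<close>
definition gverts :: "('a \<Rightarrow> 'a) set \<Rightarrow> 'a set \<Rightarrow> ('a \<times> ('a \<Rightarrow> 'a)) set" where
  "gverts G R = {(x, \<kappa>). x \<in> R \<and> \<kappa> \<in> centr G (stab G x)}"

definition garcs :: "('a \<Rightarrow> 'a) set \<Rightarrow> 'a set \<Rightarrow> ('a \<Rightarrow> ('a \<Rightarrow> 'a)) \<Rightarrow> ('a \<Rightarrow> 'a)
     \<Rightarrow> (('a \<times> ('a \<Rightarrow> 'a)) \<times> ('a \<times> ('a \<Rightarrow> 'a))) set" where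
  "garcs G R gsel f = {((z, l), (x, k)).
      (z, l) \<in> gverts G R \<and> (x, k) \<in> gverts G R \<and>
      (let y = inv f x in z = inv (gsel y) y \<and> k = pconj (pconj l (gsel y)) f)}"

text \<open>A directed cycle of a digraph with arc relation E, represented by its arc set:
the arcs v_0 -> v_1 -> ... -> v_{k-1} -> v_0 for distinct vertices v_i (k >= 1;
k = 1 is a loop).\<close>
definition dcycle :: "('v \<times> 'v) set \<Rightarrow> ('v \<times> 'v) set \<Rightarrow> bool" where
  "dcycle E C \<longleftrightarrow> C \<subseteq> E \<and> (\<exists>vs. vs \<noteq> [] \<and> distinct vs \<and>
      C = {(vs ! i, vs ! ((i + 1) mod length vs)) | i. i < length vs})"

definition cverts :: "('v \<times> 'v) set \<Rightarrow> 'v set" where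
  "cverts C = fst ` C"

definition short :: "(('a \<times> 'b) \<times> ('a \<times> 'b)) set \<Rightarrow> bool" where
  "short C \<longleftrightarrow> (\<forall>u\<in>cverts C. \<forall>v\<in>cverts C. fst u = fst v \<longrightarrow> u = v)"

definition short_cycles_on :: "('a \<Rightarrow> 'a) set \<Rightarrow> 'a set \<Rightarrow> ('a \<Rightarrow> ('a \<Rightarrow> 'a))
     \<Rightarrow> ('a \<Rightarrow> 'a) \<Rightarrow> 'a \<Rightarrow> (('a \<times> ('a \<Rightarrow> 'a)) \<times> ('a \<times> ('a \<Rightarrow> 'a))) set set" where
  "short_cycles_on G R gsel f x = {C. dcycle (garcs G R gsel f) C \<and> short C \<and>
      (\<forall>v\<in>cverts C. fst v \<in> fcycle G R f x)}"

definition gamma_r :: "('a \<Rightarrow> 'a) set \<Rightarrow> 'a set \<Rightarrow> ('a \<Rightarrow> ('a \<Rightarrow> 'a))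
     \<Rightarrow> ('a \<Rightarrow> 'a) \<Rightarrow> 'a \<Rightarrow> nat" where
  "gamma_r G R gsel f x = card (short_cycles_on G R gsel f x)"

end

theory Submission
  imports Defs
begin


lemma burnside_gen:
  fixes act :: "'b \<Rightarrow> 'f \<Rightarrow> 'b"
  assumes fF: "finite F" and fA: "finite A" and eF: "e \<in> F"
  and mulF: "\<And>f g. f \<in> F \<Longrightarrow> g \<in> F \<Longrightarrow> mul f g \<in> F"
  and ivF: "\<And>f. f \<in> F \<Longrightarrow> iv f \<in> F"
  and assoc: "\<And>a b c. a\<in>F \<Longrightarrow> b\<in>F \<Longrightarrow> c\<in>F \<Longrightarrow> mul (mul a b) c = mul a (mul b c)"
  and linv: "\<And>f. f\<in>F \<Longrightarrow> mul (iv f) f = e" and rinv: "\<And>f. f\<in>F \<Longrightarrow> mul f (iv f) = e"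
  and lid: "\<And>f. f\<in>F \<Longrightarrow> mul e f = f"
  and actA: "\<And>a f. a\<in>A \<Longrightarrow> f\<in>F \<Longrightarrow> act a f \<in> A"
  and acte: "\<And>a. a\<in>A \<Longrightarrow> act a e = a"
  and actc: "\<And>a f g. a\<in>A \<Longrightarrow> f\<in>F \<Longrightarrow> g\<in>F \<Longrightarrow> act (act a f) g = act a (mul g f)"
  shows "real (card {{act a f | f. f \<in> F} | a. a \<in> A}) = (\<Sum>f\<in>F. real (card {a\<in>A. act a f = a})) / real (card F)"
proof -
  define Ob where "Ob a = {act a f | f. f \<in> F}" for a
  define S where "S a = {f\<in>F. act a f = a}" for a
  have Oimg: "Ob a = (\<lambda>f. act a f) ` F" for a unfolding Ob_def by auto
  have OA: "Ob a \<subseteq> A" if "a \<in> A" for a using that actA unfolding Ob_def by auto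
  have aO: "a \<in> Ob a" if "a \<in> A" for a using that acte eF unfolding Ob_def by force
  have finO: "finite (Ob a)" for a using fF Oimg by simp
  have orbstab: "card F = card (Ob a) * card (S a)" if a: "a \<in> A" for a
  proof -
    have "card F = (\<Sum>b\<in>Ob a. card {f\<in>F. act a f = b})"
      using sum.image_gen[OF fF, of "\<lambda>_. 1::nat" "\<lambda>f. act a f"] Oimg by simp
    also have "\<dots> = (\<Sum>b\<in>Ob a. card (S a))"
    proof (rule sum.cong[OF refl])
      fix b assume "b \<in> Ob a"
      then obtain h where h: "h \<in> F" "b = act a h" unfolding Ob_def by auto
      have "bij_betw (\<lambda>f. mul (iv h) f) {f\<in>F. act a f = b} (S a)"
      proof (rule bij_betw_byWitness[where f' = "\<lambda>s. mul h s"])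
        show "\<forall>f\<in>{f\<in>F. act a f = b}. mul h (mul (iv h) f) = f"
          using h by (auto simp: assoc[symmetric] ivF rinv lid)
        show "\<forall>s\<in>S a. mul (iv h) (mul h s) = s"
          using h by (auto simp: S_def assoc[symmetric] ivF linv lid)
        show "(\<lambda>f. mul (iv h) f) ` {f\<in>F. act a f = b} \<subseteq> S a"
        proof
          fix x assume "x \<in> (\<lambda>f. mul (iv h) f) ` {f\<in>F. act a f = b}"
          then obtain f where f: "f \<in> F" "act a f = b" "x = mul (iv h) f" by auto
          have "act a x = act (act a f) (iv h)" by (simp add: f(3) actc[OF a f(1) ivF[OF h(1)]])
          also have "\<dots> = act (act a h) (iv h)" using f h by simp
          also have "\<dots> = act a (mul (iv h) h)" using a h ivF actc by simp
          also have "\<dots> = a" using a h linv acte by simp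
          finally show "x \<in> S a" using f h mulF ivF unfolding S_def by auto
        qed
        show "(\<lambda>s. mul h s) ` S a \<subseteq> {f\<in>F. act a f = b}"
        proof
          fix x assume "x \<in> (\<lambda>s. mul h s) ` S a"
          then obtain s where s: "s \<in> F" "act a s = a" "x = mul h s" unfolding S_def by auto
          have "act a x = act (act a s) h" by (simp add: s(3) actc[OF a s(1) h(1)])
          then show "x \<in> {f\<in>F. act a f = b}" using s h mulF by simp
        qed
      qed
      then show "card {f\<in>F. act a f = b} = card (S a)" by (rule bij_betw_same_card)
    qed
    also have "\<dots> = card (Ob a) * card (S a)" by simp
    finally show ?thesis .
  qed
  have Obsub: "Ob b \<subseteq> Ob a" if ab: "a \<in> A" "b \<in> Ob a" for a b
  proof -
    obtain h where h: "h \<in> F" "b = act a h" using ab unfolding Ob_def by auto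
    show ?thesis using h that actc mulF unfolding Ob_def by fastforce
  qed
  have Obeq: "Ob b = Ob a" if ab: "a \<in> A" "b \<in> Ob a" for a b
  proof -
    obtain h where h: "h \<in> F" "b = act a h" using ab unfolding Ob_def by auto
    have "a = act b (iv h)" using h that actc ivF linv acte by simp
    then have "a \<in> Ob b" using ivF h unfolding Ob_def by auto
    moreover have "b \<in> A" using OA that by auto
    ultimately show ?thesis using Obsub that by blast
  qed
  define Orbs where "Orbs = {Ob a | a. a \<in> A}"
  have Orbs_eq: "{{act a f | f. f \<in> F} | a. a \<in> A} = Orbs" unfolding Orbs_def Ob_def by simp
  have UOrbs: "\<Union>Orbs = A" unfolding Orbs_def using OA aO by blast
  have cardF: "card F > 0" using fF eF by (auto simp: card_gt_0_iff)
  have "(\<Sum>f\<in>F. real (card {a\<in>A. act a f = a})) = (\<Sum>f\<in>F. \<Sum>a\<in>A. if act a f = a then 1 else 0)"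
    by (simp add: fA sum.inter_filter[symmetric])
  also have "\<dots> = (\<Sum>a\<in>A. \<Sum>f\<in>F. if act a f = a then 1 else 0)" by (rule sum.swap)
  also have "\<dots> = (\<Sum>a\<in>A. real (card (S a)))"
    by (simp add: S_def fF sum.inter_filter[symmetric])
  also have "\<dots> = (\<Sum>a\<in>A. real (card F) / real (card (Ob a)))"
  proof (rule sum.cong[OF refl])
    fix a assume a: "a \<in> A"
    have "card (Ob a) > 0" using aO[OF a] finO by (auto simp: card_gt_0_iff)
    then show "real (card (S a)) = real (card F) / real (card (Ob a))"
      using orbstab[OF a] by (simp add: field_simps)
  qed
  also have "\<dots> = real (card F) * (\<Sum>a\<in>A. 1 / real (card (Ob a)))"
    by (simp add: sum_distrib_left)
  also have "(\<Sum>a\<in>A. 1 / real (card (Ob a))) = (\<Sum>X\<in>Orbs. \<Sum>a\<in>X. 1 / real (card (Ob a)))"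
  proof -
    have fin: "\<forall>X\<in>Orbs. finite X" unfolding Orbs_def using finO by auto
    have disj: "\<forall>X\<in>Orbs. \<forall>Y\<in>Orbs. X \<noteq> Y \<longrightarrow> X \<inter> Y = {}"
      proof (intro ballI impI)
        fix X Y assume "X \<in> Orbs" "Y \<in> Orbs" "X \<noteq> Y"
        then obtain a b where ab: "a \<in> A" "b \<in> A" "X = Ob a" "Y = Ob b" unfolding Orbs_def by auto
        show "X \<inter> Y = {}"
        proof (rule ccontr)
          assume "X \<inter> Y \<noteq> {}"
          then obtain c where "c \<in> Ob a" "c \<in> Ob b" using ab by auto
          then have "Ob a = Ob b" using Obeq ab by metis
          then show False using ab \<open>X \<noteq> Y\<close> by simp
        qed
      qed
    have "(\<Sum>a\<in>\<Union>Orbs. 1 / real (card (Ob a))) = (\<Sum>X\<in>Orbs. \<Sum>a\<in>X. 1 / real (card (Ob a)))"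
      using sum.Union_disjoint[OF fin disj, of "\<lambda>a. 1 / real (card (Ob a))"] by simp
    then show ?thesis using UOrbs by simp
  qed
  also have "\<dots> = (\<Sum>X\<in>Orbs. 1)"
  proof (rule sum.cong[OF refl])
    fix X assume "X \<in> Orbs"
    then obtain a where a: "a \<in> A" "X = Ob a" unfolding Orbs_def by auto
    have "(\<Sum>b\<in>X. 1 / real (card (Ob b))) = (\<Sum>b\<in>X. 1 / real (card X))"
      using a Obeq by (intro sum.cong) auto
    also have "\<dots> = 1" using aO[OF a(1)] a finO by (auto simp: card_gt_0_iff)
    finally show "(\<Sum>b\<in>X. 1 / real (card (Ob b))) = 1" .
  qed
  finally show ?thesis using Orbs_eq cardF by (simp add: field_simps)
qed




lemma pconj_apply: "pconj p h x = h (p (inv h x))"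
  by (simp add: pconj_def)

lemma pconj_id[simp]: "pconj p id = p"
  by (simp add: pconj_def)

lemma pconj_comp: "bij a \<Longrightarrow> bij b \<Longrightarrow> pconj (pconj p a) b = pconj p (b \<circ> a)"
  by (simp add: pconj_def o_inv_distrib o_assoc)

locale ctx =
  fixes X :: "'a set" and G :: "('a \<Rightarrow> 'a) set" and R :: "'a set" and gsel :: "'a \<Rightarrow> ('a \<Rightarrow> 'a)"
  assumes finX: "finite X" and pg: "perm_group X G" and reps: "orbit_reps X G R"
  and gs: "\<forall>y\<in>X. gsel y \<in> G \<and> gsel y (repr G R y) = y"
begin

abbreviation "F \<equiv> normalizer X G"

lemma G_perm: "g \<in> G \<Longrightarrow> g permutes X"
  using pg by (auto simp: perm_group_def)
lemma id_G: "id \<in> G"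
  using pg by (auto simp: perm_group_def)
lemma comp_G: "p \<in> G \<Longrightarrow> q \<in> G \<Longrightarrow> q \<circ> p \<in> G"
  using pg by (auto simp: perm_group_def)
lemma inv_G: "p \<in> G \<Longrightarrow> inv p \<in> G"
  using pg by (auto simp: perm_group_def)
lemma F_perm: "f \<in> F \<Longrightarrow> f permutes X"
  by (simp add: normalizer_def)
lemma F_conjG: "f \<in> F \<Longrightarrow> g \<in> G \<Longrightarrow> pconj g f \<in> G"
  by (auto simp: normalizer_def)
lemma F_img: "f \<in> F \<Longrightarrow> (\<lambda>h. pconj h f) ` G = G"
  by (auto simp: normalizer_def)

lemma id_F: "id \<in> F"
  by (simp add: normalizer_def permutes_id)

lemma inv_F: assumes f: "f \<in> F" shows "inv f \<in> F"
proof -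
  have fp: "f permutes X" using F_perm f .
  have bf: "bij f" "bij (inv f)" using fp permutes_bij permutes_inv by blast+
  have io: "inv f \<circ> f = id" using fp permutes_inv_o(2) by blast
  have "(\<lambda>h. pconj h (inv f)) ` G = G"
  proof
    show "(\<lambda>h. pconj h (inv f)) ` G \<subseteq> G"
    proof
      fix x assume "x \<in> (\<lambda>h. pconj h (inv f)) ` G"
      then obtain h where h: "h \<in> G" "x = pconj h (inv f)" by auto
      then obtain h' where h': "h' \<in> G" "h = pconj h' f" using F_img[OF f] by blast
      have "x = pconj h' (inv f \<circ> f)" using h h' pconj_comp bf by simp
      then show "x \<in> G" using io h' by simp
    qed
    show "G \<subseteq> (\<lambda>h. pconj h (inv f)) ` G"
    proof
      fix h assume h: "h \<in> G"
      have "pconj (pconj h f) (inv f) = h" by (simp add: pconj_comp[OF bf(1) bf(2)] io)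
      then show "h \<in> (\<lambda>h. pconj h (inv f)) ` G" using F_conjG[OF f h] by force
    qed
  qed
  then show ?thesis using permutes_inv[OF fp] by (simp add: normalizer_def)
qed

lemma comp_F: assumes f: "f \<in> F" and g: "g \<in> F" shows "f \<circ> g \<in> F"
proof -
  have bf: "bij f" "bij g" using F_perm f g permutes_bij by blast+
  have "(\<lambda>h. pconj h (f \<circ> g)) ` G = (\<lambda>h. pconj h f) ` ((\<lambda>h. pconj h g) ` G)"
    by (simp add: image_image pconj_comp bf)
  also have "\<dots> = G" using F_img f g by simp
  moreover have "f \<circ> g permutes X" using permutes_compose[OF F_perm[OF g] F_perm[OF f]] .
  ultimately show ?thesis by (simp add: normalizer_def)
qed

lemma G_F: assumes g: "g \<in> G" shows "g \<in> F"
proof -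
  have gp: "g permutes X" using G_perm g .
  have bg: "bij g" "bij (inv g)" using gp permutes_bij permutes_inv by blast+
  have "(\<lambda>h. pconj h g) ` G = G"
  proof
    show "(\<lambda>h. pconj h g) ` G \<subseteq> G"
    proof
      fix x assume "x \<in> (\<lambda>h. pconj h g) ` G"
      then obtain h where h: "h \<in> G" "x = pconj h g" by auto
      have "g \<circ> h \<circ> inv g \<in> G" using comp_G[OF comp_G[OF inv_G[OF g] h(1)] g] by (simp add: o_assoc)
      then show "x \<in> G" using h by (simp add: pconj_def)
    qed
    show "G \<subseteq> (\<lambda>h. pconj h g) ` G"
    proof
      fix h assume h: "h \<in> G"
      have "pconj (pconj h (inv g)) g = h"
        by (simp add: pconj_comp[OF bg(2) bg(1)] permutes_inv_o(1)[OF gp])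
      moreover have "pconj h (inv g) \<in> G"
        using comp_G[OF comp_G[OF inv_G[OF inv_G[OF g]] h] inv_G[OF g]] by (simp add: pconj_def o_assoc)
      ultimately show "h \<in> (\<lambda>h. pconj h g) ` G" by force
    qed
  qed
  then show ?thesis using gp by (simp add: normalizer_def)
qed

lemma finG: "finite G"
proof -
  have "G \<subseteq> {p. p permutes X}" using G_perm by blast
  then show ?thesis using finite_permutations[OF finX] finite_subset by blast
qed
lemma finF: "finite F"
proof -
  have "F \<subseteq> {p. p permutes X}" using F_perm by blast
  then show ?thesis using finite_permutations[OF finX] finite_subset by blast
qed

lemma F_X: "f \<in> F \<Longrightarrow> x \<in> X \<Longrightarrow> f x \<in> X"
  by (simp add: permutes_in_image[OF F_perm])
lemma F_invX: "f \<in> F \<Longrightarrow> x \<in> X \<Longrightarrow> inv f x \<in> X"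
  by (simp add: permutes_in_image[OF F_perm[OF inv_F]])
lemma F_inv1: "f \<in> F \<Longrightarrow> f (inv f x) = x"
  by (rule permutes_inverses(1)[OF F_perm])
lemma F_inv2: "f \<in> F \<Longrightarrow> inv f (f x) = x"
  by (rule permutes_inverses(2)[OF F_perm])
lemma F_bij: "f \<in> F \<Longrightarrow> bij f"
  by (rule permutes_bij[OF F_perm])

lemma G_bij: "g \<in> G \<Longrightarrow> bij g" by (rule F_bij[OF G_F])
lemma G_inv1: "g \<in> G \<Longrightarrow> g (inv g x) = x" by (rule F_inv1[OF G_F])

lemma orbI: "g \<in> G \<Longrightarrow> y = g x \<Longrightarrow> y \<in> orb G x"
  unfolding orb_def by blast
lemma orb_refl: "x \<in> orb G x"
  using orbI[OF id_G] by simp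
lemma orb_sym: assumes "y \<in> orb G x" shows "x \<in> orb G y"
proof -
  obtain g where g: "g \<in> G" "y = g x" using assms by (auto simp: orb_def)
  have "x = inv g y" using g F_inv2[OF G_F[OF g(1)]] by simp
  then show ?thesis using orbI[OF inv_G[OF g(1)]] by blast
qed
lemma orb_trans: assumes "y \<in> orb G x" "z \<in> orb G y" shows "z \<in> orb G x"
proof -
  obtain g where g: "g \<in> G" "y = g x" using assms by (auto simp: orb_def)
  obtain h where h: "h \<in> G" "z = h y" using assms by (auto simp: orb_def)
  have "z = (h \<circ> g) x" using g h by simp
  then show ?thesis using orbI[OF comp_G[OF g(1) h(1)]] by blast
qed
lemma orb_X: assumes "x \<in> X" "y \<in> orb G x" shows "y \<in> X"
proof -
  obtain g where g: "g \<in> G" "y = g x" using assms by (auto simp: orb_def)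
  then show ?thesis using F_X[OF G_F[OF g(1)] assms(1)] by simp
qed

lemma R_X: "R \<subseteq> X"
  using reps by (simp add: orbit_reps_def)

lemma repr_prop: assumes "y \<in> X" shows "repr G R y \<in> R \<and> repr G R y \<in> orb G y"
proof -
  have "\<exists>!r. r \<in> R \<and> r \<in> orb G y" using reps assms by (simp add: orbit_reps_def)
  then show ?thesis unfolding repr_def by (rule theI')
qed

lemma repr_unique: assumes "y \<in> X" "r \<in> R" "r \<in> orb G y" shows "repr G R y = r"
proof -
  have "\<exists>!r. r \<in> R \<and> r \<in> orb G y" using reps assms by (simp add: orbit_reps_def)
  then show ?thesis unfolding repr_def using assms by (blast intro: the1_equality)
qed

lemma repr_R: "r \<in> R \<Longrightarrow> repr G R r = r"
  using repr_unique R_X orb_refl by blast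

lemma repr_orb: assumes "y \<in> X" "z \<in> orb G y" shows "repr G R z = repr G R y"
proof -
  have "repr G R y \<in> orb G z" using repr_prop[OF assms(1)] orb_sym[OF assms(2)] orb_trans by blast
  then show ?thesis using repr_unique orb_X assms repr_prop by blast
qed

lemma F_orb: assumes f: "f \<in> F" and y: "y \<in> orb G x" shows "f y \<in> orb G (f x)"
proof -
  obtain g where g: "g \<in> G" "y = g x" using y by (auto simp: orb_def)
  have "f y = pconj g f (f x)" using g F_inv2[OF f] by (simp add: pconj_apply)
  then show ?thesis using orbI[OF F_conjG[OF f g(1)]] by blast
qed

lemma gsel_G: "y \<in> X \<Longrightarrow> gsel y \<in> G" using gs by blast
lemma gsel_repr: "y \<in> X \<Longrightarrow> gsel y (repr G R y) = y" using gs by blast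
lemma gsel_inv: "y \<in> X \<Longrightarrow> inv (gsel y) y = repr G R y"
  using gsel_repr[of y] F_inv2[OF G_F[OF gsel_G[of y]], of "repr G R y"] by simp

lemma centr_conj:
  assumes h: "h \<in> F" and c: "c \<in> centr G (stab G y)"
  shows "pconj c h \<in> centr G (stab G (h y))"
proof -
  have cG: "c \<in> G" using c by (simp add: centr_def)
  have "pconj c h \<circ> s = s \<circ> pconj c h" if s: "s \<in> G" "s (h y) = h y" for s
  proof
    fix t
    define s' where "s' = pconj s (inv h)"
    have s'G: "s' \<in> G" using F_conjG[OF inv_F[OF h] s(1)] s'_def by simp
    have s'a: "s' u = inv h (s (h u))" for u
      using s'_def by (simp add: pconj_apply permutes_inv_inv[OF F_perm[OF h]])
    have "s' y = y" using s'a s(2) F_inv2[OF h] by simp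
    then have "c \<circ> s' = s' \<circ> c" using c s'G by (auto simp: centr_def stab_def)
    then have "c (s' (inv h t)) = s' (c (inv h t))" by (metis comp_apply)
    then have "c (inv h (s t)) = inv h (s (h (c (inv h t))))" using s'a F_inv1[OF h] by simp
    then have "h (c (inv h (s t))) = s (h (c (inv h t)))" using F_inv1[OF h] by metis
    then show "(pconj c h \<circ> s) t = (s \<circ> pconj c h) t" by (simp add: pconj_apply)
  qed
  then show ?thesis using F_conjG[OF h cG] by (auto simp: centr_def stab_def)
qed

definition fext :: "('a \<Rightarrow> ('a \<Rightarrow> 'a)) \<Rightarrow> 'a \<Rightarrow> ('a \<Rightarrow> 'a)" where
  "fext L y = pconj (L (repr G R y)) (gsel y)"

lemma fol_cent: "L \<in> folders G R \<Longrightarrow> r \<in> R \<Longrightarrow> L r \<in> centr G (stab G r)"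
  by (auto simp: folders_def)

lemma key:
  assumes L: "L \<in> folders G R" and y: "y \<in> X" and g: "g \<in> G" and gr: "g (repr G R y) = y"
  shows "pconj (L (repr G R y)) g = fext L y"
proof -
  define r where "r = repr G R y"
  have r: "r \<in> R" using repr_prop[OF y] r_def by simp
  define s where "s = inv (gsel y) \<circ> g"
  have sG: "s \<in> G" using s_def comp_G inv_G gsel_G[OF y] g by simp
  have sr: "s r = r" using s_def gr r_def gsel_inv[OF y] by simp
  have comm: "L r \<circ> s = s \<circ> L r" using fol_cent[OF L r] sG sr by (auto simp: centr_def stab_def)
  have gs': "g = gsel y \<circ> s" using s_def F_inv1[OF G_F[OF gsel_G[OF y]]] by (auto simp: fun_eq_iff)
  have bs: "bij s" "bij (gsel y)" using G_bij[OF sG] G_bij[OF gsel_G[OF y]] by blast+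
  have "pconj (L r) s = L r"
  proof
    fix t show "pconj (L r) s t = L r t"
      using fun_cong[OF comm, of "inv s t"] G_inv1[OF sG] by (simp add: pconj_apply)
  qed
  then have "pconj (L r) g = pconj (L r) (gsel y)"
    using gs' pconj_comp[OF bs(1) bs(2), of "L r"] by simp
  then show ?thesis using r_def fext_def by simp
qed

lemma fext_centr: assumes L: "L \<in> folders G R" and y: "y \<in> X"
  shows "fext L y \<in> centr G (stab G y)"
  using centr_conj[OF G_F[OF gsel_G[OF y]] fol_cent[OF L], of "repr G R y"] repr_prop[OF y]
    gsel_repr[OF y] by (simp add: fext_def)

lemma fext_G: assumes L: "L \<in> folders G R" and y: "y \<in> X" and g: "g \<in> G"
  shows "fext L (g y) = pconj (fext L y) g"
proof -
  have gy: "g y \<in> X" using F_X[OF G_F[OF g] y] .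
  have rep: "repr G R (g y) = repr G R y" using repr_orb[OF y] g by (force simp: orb_def)
  have "pconj (L (repr G R (g y))) (g \<circ> gsel y) = fext L (g y)"
    using key[OF L gy comp_G[OF gsel_G[OF y] g]] rep gsel_repr[OF y] by simp
  moreover have "pconj (L (repr G R y)) (g \<circ> gsel y) = pconj (fext L y) g"
    using pconj_comp[OF G_bij[OF gsel_G[OF y]] G_bij[OF g]] by (simp add: fext_def)
  ultimately show ?thesis using rep by simp
qed

lemma fext_R: assumes L: "L \<in> folders G R" and x: "x \<in> R" shows "fext L x = L x"
  using key[OF L _ id_G, of x] R_X x repr_R[OF x] by auto

lemma fol_act_eq: assumes f: "f \<in> F" and x: "x \<in> R"
  shows "fol_act R gsel L f x = pconj (fext L (inv f x)) f"
proof -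
  have y: "inv f x \<in> X" using F_invX[OF f] R_X x by blast
  show ?thesis using x gsel_inv[OF y] by (simp add: fol_act_def Let_def fext_def)
qed

lemma act_folders: assumes L: "L \<in> folders G R" and f: "f \<in> F"
  shows "fol_act R gsel L f \<in> folders G R"
proof -
  have "fol_act R gsel L f x \<in> centr G (stab G x)" if x: "x \<in> R" for x
  proof -
    have y: "inv f x \<in> X" using F_invX[OF f] R_X x by blast
    show ?thesis using centr_conj[OF f fext_centr[OF L y]] fol_act_eq[OF f x] F_inv1[OF f] by simp
  qed
  then show ?thesis by (auto simp: folders_def fol_act_def)
qed

lemma fext_act: assumes L: "L \<in> folders G R" and f: "f \<in> F" and w: "w \<in> X"
  shows "fext (fol_act R gsel L f) w = pconj (fext L (inv f w)) f"
proof -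
  define x where "x = repr G R w"
  have x: "x \<in> R" using repr_prop[OF w] x_def by simp
  have ix: "inv f x \<in> X" using F_invX[OF f] R_X x by blast
  define h where "h = pconj (gsel w) (inv f)"
  have hG: "h \<in> G" using h_def F_conjG[OF inv_F[OF f] gsel_G[OF w]] by simp
  have ha: "h u = inv f (gsel w (f u))" for u
    using h_def by (simp add: pconj_apply permutes_inv_inv[OF F_perm[OF f]])
  have hx: "h (inv f x) = inv f w" using ha F_inv1[OF f] gsel_repr[OF w] x_def by simp
  have fh: "f \<circ> h = gsel w \<circ> f" using ha F_inv1[OF f] by (auto simp: fun_eq_iff)
  have bb: "bij f" "bij h" "bij (gsel w)" using F_bij[OF f] G_bij[OF hG] G_bij[OF gsel_G[OF w]] by blast+
  have "fext (fol_act R gsel L f) w = pconj (pconj (fext L (inv f x)) f) (gsel w)"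
    using fol_act_eq[OF f x] x_def by (simp add: fext_def)
  also have "\<dots> = pconj (fext L (inv f x)) (gsel w \<circ> f)" using pconj_comp[OF bb(1) bb(3)] by simp
  also have "\<dots> = pconj (fext L (inv f x)) (f \<circ> h)" using fh by simp
  also have "\<dots> = pconj (pconj (fext L (inv f x)) h) f" using pconj_comp[OF bb(2) bb(1)] by simp
  also have "\<dots> = pconj (fext L (inv f w)) f" using fext_G[OF L ix hG] hx by simp
  finally show ?thesis .
qed

lemma act_id: assumes L: "L \<in> folders G R" shows "fol_act R gsel L id = L"
proof
  fix x show "fol_act R gsel L id x = L x"
  proof (cases "x \<in> R")
    case True then show ?thesis using fol_act_eq[OF id_F True] fext_R[OF L True] by simp
  next
    case False
    have "L x = undefined" using PiE_arb[OF L[unfolded folders_def] False] .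
    then show ?thesis using False by (simp add: fol_act_def)
  qed
qed

lemma act_comp: assumes L: "L \<in> folders G R" and f: "f \<in> F" and g: "g \<in> F"
  shows "fol_act R gsel (fol_act R gsel L f) g = fol_act R gsel L (g \<circ> f)"
proof
  fix x show "fol_act R gsel (fol_act R gsel L f) g x = fol_act R gsel L (g \<circ> f) x"
  proof (cases "x \<in> R")
    case True
    have y: "inv g x \<in> X" using F_invX[OF g] R_X True by blast
    have "fol_act R gsel (fol_act R gsel L f) g x = pconj (pconj (fext L (inv f (inv g x))) f) g"
      using fol_act_eq[OF g True] fext_act[OF L f y] by simp
    also have "\<dots> = pconj (fext L (inv f (inv g x))) (g \<circ> f)"
      by (rule pconj_comp[OF F_bij[OF f] F_bij[OF g]])
    also have "\<dots> = pconj (fext L (inv (g \<circ> f) x)) (g \<circ> f)"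
      by (simp add: o_inv_distrib[OF F_bij[OF g] F_bij[OF f]])
    also have "\<dots> = fol_act R gsel L (g \<circ> f) x" using fol_act_eq[OF comp_F[OF g f] True] by simp
    finally show ?thesis .
  next
    case False then show ?thesis by (simp add: fol_act_def)
  qed
qed

lemma fin_folders: "finite (folders G R)"
proof -
  have s: "folders G R \<subseteq> PiE R (\<lambda>_. G)" unfolding folders_def centr_def by (rule PiE_mono) blast
  have fR: "finite R" using finite_subset[OF R_X finX] .
  have "finite (PiE R (\<lambda>_. G))" by (rule finite_PiE[OF fR finG])
  then show ?thesis by (rule finite_subset[OF s])
qed

lemma burnside_part:
  "real (card (fol_orbits G R gsel F)) = (\<Sum>f\<in>F. real (card (fixset G R gsel f))) / real (card F)"
proof -
  have a1: "\<And>f g. f \<in> F \<Longrightarrow> g \<in> F \<Longrightarrow> f \<circ> g \<in> F" by (rule comp_F)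
  have a2: "\<And>f. f \<in> F \<Longrightarrow> inv f \<in> F" by (rule inv_F)
  have a3: "\<And>a b c. a \<in> F \<Longrightarrow> b \<in> F \<Longrightarrow> c \<in> F \<Longrightarrow> a \<circ> b \<circ> c = a \<circ> (b \<circ> c)" by (simp add: o_assoc)
  have a4: "\<And>f. f \<in> F \<Longrightarrow> inv f \<circ> f = id" using permutes_inv_o(2)[OF F_perm] by blast
  have a5: "\<And>f. f \<in> F \<Longrightarrow> f \<circ> inv f = id" using permutes_inv_o(1)[OF F_perm] by blast
  have a6: "\<And>f. f \<in> F \<Longrightarrow> id \<circ> f = f" by simp
  have a7: "\<And>a f. a \<in> folders G R \<Longrightarrow> f \<in> F \<Longrightarrow> fol_act R gsel a f \<in> folders G R" by (rule act_folders)
  have a8: "\<And>a. a \<in> folders G R \<Longrightarrow> fol_act R gsel a id = a" by (rule act_id)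
  have a9: "\<And>a f g. a \<in> folders G R \<Longrightarrow> f \<in> F \<Longrightarrow> g \<in> F \<Longrightarrow> fol_act R gsel (fol_act R gsel a f) g = fol_act R gsel a (g \<circ> f)" by (rule act_comp)
  note B = burnside_gen[of F "folders G R" id "(\<circ>)" inv "\<lambda>a f. fol_act R gsel a f", OF finF fin_folders id_F a1 a2 a3 a4 a5 a6 a7 a8 a9]
  show ?thesis unfolding fol_orbits_def fixset_def by (rule B)
qed

end



locale ctxf = ctx +
  fixes f assumes fF: "f \<in> normalizer X G"
begin

abbreviation "fb \<equiv> fbar G R f"

definition E :: "'a \<Rightarrow> ('a \<Rightarrow> 'a) \<Rightarrow> ('a \<Rightarrow> 'a)" where
  "E z l = pconj (pconj l (gsel (inv f (fb z)))) f"

lemma RX: "z \<in> R \<Longrightarrow> z \<in> X" using R_X by (rule subsetD)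
lemma fb_R: "z \<in> R \<Longrightarrow> fb z \<in> R"
  unfolding fbar_def using repr_prop[OF F_X[OF fF RX]] by simp

lemma arc_block: assumes z: "z \<in> R" and x: "x \<in> R"
  shows "z = repr G R (inv f x) \<longleftrightarrow> x = fb z"
proof
  assume zr: "z = repr G R (inv f x)"
  have ix: "inv f x \<in> X" using F_invX[OF fF RX[OF x]] .
  have "z \<in> orb G (inv f x)" using repr_prop[OF ix] zr by simp
  then have "f z \<in> orb G (f (inv f x))" by (rule F_orb[OF fF])
  then have "f z \<in> orb G x" using F_inv1[OF fF] by simp
  then have "x \<in> orb G (f z)" by (rule orb_sym)
  moreover have "f z \<in> X" using F_X[OF fF RX[OF z]] .
  ultimately show "x = fb z" unfolding fbar_def using repr_unique[OF _ x] by simp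
next
  assume xf: "x = fb z"
  have fz: "f z \<in> X" using F_X[OF fF RX[OF z]] .
  have ix: "inv f x \<in> X" using F_invX[OF fF RX[OF x]] .
  have "x \<in> orb G (f z)" using xf repr_prop[OF fz] by (simp add: fbar_def)
  then have "f z \<in> orb G x" by (rule orb_sym)
  then have "inv f (f z) \<in> orb G (inv f x)" by (rule F_orb[OF inv_F[OF fF]])
  then have "z \<in> orb G (inv f x)" using F_inv2[OF fF] by simp
  then show "z = repr G R (inv f x)" using repr_unique[OF ix z] by simp
qed

lemma fb_inj: assumes "z \<in> R" "z' \<in> R" "fb z = fb z'" shows "z = z'"
proof -
  have "z = repr G R (inv f (fb z))" using arc_block[OF assms(1) fb_R[OF assms(1)]] by simp
  moreover have "z' = repr G R (inv f (fb z'))" using arc_block[OF assms(2) fb_R[OF assms(2)]] by simp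
  ultimately show ?thesis using assms by simp
qed

lemma fbpow_R: "c \<in> R \<Longrightarrow> (fb ^^ n) c \<in> R"
  by (induct n) (auto simp: fb_R)

lemma period: assumes c: "c \<in> R" shows "\<exists>n>0. (fb ^^ n) c = c"
proof -
  define s where "s = (\<lambda>w. if w \<in> R then fb w else w)"
  have spow: "(s ^^ n) c = (fb ^^ n) c" for n
    by (induct n) (auto simp: s_def fbpow_R[OF c])
  have "inj s"
  proof (rule injI)
    fix a b assume "s a = s b"
    then show "a = b" unfolding s_def using fb_inj[of a b] fb_R[of a] fb_R[of b] by (auto split: if_splits)
  qed
  moreover have "finite {y. \<exists>n. y = (s ^^ n) c}"
  proof -
    have "{y. \<exists>n. y = (s ^^ n) c} \<subseteq> R" using spow fbpow_R[OF c] by auto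
    moreover have "finite R" using finite_subset[OF R_X finX] .
    ultimately show ?thesis by (rule finite_subset)
  qed
  ultimately obtain n where "n > 0" "(s ^^ n) c = c" by (rule funpow_inj_finite)
  then show ?thesis using spow[of n] by auto
qed

definition per :: "'a \<Rightarrow> nat" where "per c = (LEAST n. 0 < n \<and> (fb ^^ n) c = c)"

lemma per: assumes "c \<in> R" shows "0 < per c" "(fb ^^ per c) c = c"
  using LeastI_ex[OF period[OF assms]] unfolding per_def by auto

lemma per_min: "0 < m \<Longrightarrow> m < per c \<Longrightarrow> (fb ^^ m) c \<noteq> c"
  unfolding per_def using not_less_Least[of m "\<lambda>n. 0 < n \<and> (fb ^^ n) c = c"] by auto

lemma fbpow_mod: "c \<in> R \<Longrightarrow> (fb ^^ (m mod per c)) c = (fb ^^ m) c"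
  using funpow_mod_eq[where f=fb and n="per c" and x=c and m=m] per(2)[of c] by simp

lemma fcyc_eq: assumes c: "c \<in> R"
  shows "fcycle G R f c = (\<lambda>k. (fb ^^ k) c) ` {0..<per c}"
proof
  show "fcycle G R f c \<subseteq> (\<lambda>k. (fb ^^ k) c) ` {0..<per c}"
  proof
    fix w assume "w \<in> fcycle G R f c"
    then obtain n where n: "w = (fb ^^ n) c" by (auto simp: fcycle_def)
    then have "w = (fb ^^ (n mod per c)) c" using fbpow_mod[OF c] by simp
    moreover have "n mod per c \<in> {0..<per c}" using per(1)[OF c] by simp
    ultimately show "w \<in> (\<lambda>k. (fb ^^ k) c) ` {0..<per c}" by blast
  qed
  show "(\<lambda>k. (fb ^^ k) c) ` {0..<per c} \<subseteq> fcycle G R f c" by (auto simp: fcycle_def)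
qed

lemma fcyc_R: "c \<in> R \<Longrightarrow> w \<in> fcycle G R f c \<Longrightarrow> w \<in> R"
  using fbpow_R[of c] by (auto simp: fcycle_def)

lemma fcyc_self: "c \<in> fcycle G R f c"
proof -
  have "c = (fb ^^ 0) c" by simp
  then show ?thesis unfolding fcycle_def by blast
qed

lemma fcyc_step: assumes "w \<in> fcycle G R f c" shows "fb w \<in> fcycle G R f c"
proof -
  obtain n where "w = (fb ^^ n) c" using assms by (auto simp: fcycle_def)
  then have "fb w = (fb ^^ Suc n) c" by simp
  then show ?thesis unfolding fcycle_def by blast
qed

lemma fcyc_sub: assumes c: "c \<in> R" and w0: "w0 \<in> fcycle G R f c"
  shows "fcycle G R f c \<subseteq> fcycle G R f w0"
proof
  fix w assume "w \<in> fcycle G R f c"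
  then obtain m where m: "w = (fb ^^ m) c" by (auto simp: fcycle_def)
  obtain j where j: "w0 = (fb ^^ j) c" using w0 by (auto simp: fcycle_def)
  define p where "p = per c"
  have p: "p > 0" using per(1)[OF c] p_def by simp
  have jj: "j \<le> p * j" using p by simp
  define n where "n = m + p * j - j"
  have "(fb ^^ n) w0 = (fb ^^ (n + j)) c" using j by (simp add: funpow_add)
  also have "n + j = m + p * j" using jj unfolding n_def by linarith
  also have "(fb ^^ (m + p * j)) c = (fb ^^ ((m + p * j) mod p)) c" by (simp only: p_def fbpow_mod[OF c])
  also have "(m + p * j) mod p = m mod p" by simp
  also have "(fb ^^ (m mod p)) c = w" using fbpow_mod[OF c] p_def m by simp
  finally show "w \<in> fcycle G R f w0" unfolding fcycle_def by blast
qed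

lemma arc_iff:
  "((z, l), (x, k)) \<in> garcs G R gsel f \<longleftrightarrow>
     (z, l) \<in> gverts G R \<and> (x, k) \<in> gverts G R \<and> x = fb z \<and> k = E z l"
proof
  assume a: "((z, l), (x, k)) \<in> garcs G R gsel f"
  then have zx: "z \<in> R" "x \<in> R" by (auto simp: garcs_def gverts_def)
  have ix: "inv f x \<in> X" using F_invX[OF fF RX[OF zx(2)]] .
  have "z = repr G R (inv f x)" using a gsel_inv[OF ix] by (simp add: garcs_def Let_def)
  then have "x = fb z" using arc_block[OF zx] by simp
  then show "(z, l) \<in> gverts G R \<and> (x, k) \<in> gverts G R \<and> x = fb z \<and> k = E z l"
    using a by (auto simp: garcs_def Let_def E_def)
next
  assume a: "(z, l) \<in> gverts G R \<and> (x, k) \<in> gverts G R \<and> x = fb z \<and> k = E z l"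
  then have zx: "z \<in> R" "x \<in> R" by (auto simp: gverts_def)
  have ix: "inv f x \<in> X" using F_invX[OF fF RX[OF zx(2)]] .
  have "z = repr G R (inv f x)" using arc_block[OF zx] a by simp
  then show "((z, l), (x, k)) \<in> garcs G R gsel f"
    using a gsel_inv[OF ix] unfolding garcs_def Let_def E_def by auto
qed

lemma fa_eq: assumes x: "x \<in> R"
  shows "fol_act R gsel L f x = pconj (pconj (L (repr G R (inv f x))) (gsel (inv f x))) f"
proof -
  have ix: "inv f x \<in> X" using F_invX[OF fF RX[OF x]] .
  show ?thesis using x gsel_inv[OF ix] by (simp add: fol_act_def Let_def)
qed

lemma fix_iff: assumes L: "L \<in> folders G R"
  shows "fol_act R gsel L f = L \<longleftrightarrow> (\<forall>z\<in>R. L (fb z) = E z (L z))"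
proof
  assume fx: "fol_act R gsel L f = L"
  show "\<forall>z\<in>R. L (fb z) = E z (L z)"
  proof
    fix z assume z: "z \<in> R"
    have x: "fb z \<in> R" using fb_R[OF z] .
    have zr: "repr G R (inv f (fb z)) = z" using arc_block[OF z x] by simp
    have "L (fb z) = fol_act R gsel L f (fb z)" using fx by simp
    also have "\<dots> = E z (L z)" unfolding fa_eq[OF x, of L] zr E_def ..
    finally show "L (fb z) = E z (L z)" .
  qed
next
  assume h: "\<forall>z\<in>R. L (fb z) = E z (L z)"
  show "fol_act R gsel L f = L"
  proof
    fix x show "fol_act R gsel L f x = L x"
    proof (cases "x \<in> R")
      case True
      have ix: "inv f x \<in> X" using F_invX[OF fF RX[OF True]] .
      define z where "z = repr G R (inv f x)"
      have z: "z \<in> R" using repr_prop[OF ix] z_def by simp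
      have xz: "x = fb z" using arc_block[OF z True] z_def by simp
      have zr: "repr G R (inv f x) = z" using z_def by simp
      have "fol_act R gsel L f x = pconj (pconj (L z) (gsel (inv f x))) f"
        unfolding fa_eq[OF True, of L] zr ..
      also have "\<dots> = E z (L z)" unfolding E_def xz ..
      also have "\<dots> = L (fb z)" using h z by simp
      finally show ?thesis using xz by simp
    next
      case False
      have "L x = undefined" using PiE_arb[OF L[unfolded folders_def] False] .
      then show ?thesis using False by (simp add: fol_act_def)
    qed
  qed
qed

definition cyc :: "('a \<Rightarrow> ('a \<Rightarrow> 'a)) \<Rightarrow> 'a \<Rightarrow> (('a \<times> ('a \<Rightarrow> 'a)) \<times> ('a \<times> ('a \<Rightarrow> 'a))) set" where
  "cyc L c = {((w, L w), (fb w, L (fb w))) | w. w \<in> fcycle G R f c}"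

lemma cyc_fst: "fst ` cyc L c = {(w, L w) | w. w \<in> fcycle G R f c}"
  unfolding cyc_def by force

end



context ctxf begin

lemma cyc_short: assumes L: "L \<in> fixset G R gsel f" and c: "c \<in> R"
  shows "cyc L c \<in> short_cycles_on G R gsel f c"
proof -
  have Lf: "L \<in> folders G R" and fx: "fol_act R gsel L f = L" using L by (auto simp: fixset_def)
  have fixE0: "\<forall>z\<in>R. L (fb z) = E z (L z)" using fix_iff[OF Lf] fx by simp
  have fixE: "L (fb z) = E z (L z)" if "z \<in> R" for z using fixE0 that by simp
  define p where "p = per c"
  have p0: "p > 0" using per(1)[OF c] p_def by simp
  define vs where "vs = map (\<lambda>k. ((fb ^^ k) c, L ((fb ^^ k) c))) [0..<p]"
  have len: "length vs = p" unfolding vs_def by simp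
  have nth: "vs ! i = ((fb ^^ i) c, L ((fb ^^ i) c))" if "i < p" for i
    unfolding vs_def using that by simp
  have nxt: "(fb ^^ ((i + 1) mod p)) c = fb ((fb ^^ i) c)" for i
  proof -
    have "(fb ^^ ((i + 1) mod p)) c = (fb ^^ (i + 1)) c" unfolding p_def by (rule fbpow_mod[OF c])
    then show ?thesis by simp
  qed
  have inj: "inj_on (\<lambda>k. (fb ^^ k) c) {0..<p}"
  proof (rule inj_on_funpow_least)
    show "(fb ^^ p) c = c" using per(2)[OF c] p_def by simp
    show "\<And>m. 0 < m \<Longrightarrow> m < p \<Longrightarrow> (fb ^^ m) c \<noteq> c" using per_min p_def by simp
  qed
  have dist: "distinct vs"
    unfolding vs_def distinct_map
  proof
    show "distinct [0..<p]" by simp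
    show "inj_on (\<lambda>k. ((fb ^^ k) c, L ((fb ^^ k) c))) (set [0..<p])"
    proof (rule inj_onI)
      fix a b assume "a \<in> set [0..<p]" "b \<in> set [0..<p]"
        "((fb ^^ a) c, L ((fb ^^ a) c)) = ((fb ^^ b) c, L ((fb ^^ b) c))"
      then show "a = b" using inj unfolding inj_on_def by auto
    qed
  qed
  have vsne: "vs \<noteq> []" using len p0 by auto
  have seteq: "cyc L c = {(vs ! i, vs ! ((i + 1) mod length vs)) | i. i < length vs}"
  proof
    show "cyc L c \<subseteq> {(vs ! i, vs ! ((i + 1) mod length vs)) | i. i < length vs}"
    proof
      fix a assume "a \<in> cyc L c"
      then obtain w where w: "w \<in> fcycle G R f c" "a = ((w, L w), (fb w, L (fb w)))"
        unfolding cyc_def by blast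
      then obtain n where n: "w = (fb ^^ n) c" by (auto simp: fcycle_def)
      define i where "i = n mod p"
      have i: "i < p" using p0 i_def by simp
      have wi: "w = (fb ^^ i) c" using n fbpow_mod[OF c, of n] i_def p_def by simp
      have "a = (vs ! i, vs ! ((i + 1) mod p))"
        using w(2) nth[OF i] nth[of "(i + 1) mod p"] p0 nxt[of i] wi by simp
      then show "a \<in> {(vs ! i, vs ! ((i + 1) mod length vs)) | i. i < length vs}"
        using i len by auto
    qed
    show "{(vs ! i, vs ! ((i + 1) mod length vs)) | i. i < length vs} \<subseteq> cyc L c"
    proof
      fix a assume "a \<in> {(vs ! i, vs ! ((i + 1) mod length vs)) | i. i < length vs}"
      then obtain i where i: "i < p" "a = (vs ! i, vs ! ((i + 1) mod p))" using len by auto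
      have "a = (((fb ^^ i) c, L ((fb ^^ i) c)), (fb ((fb ^^ i) c), L (fb ((fb ^^ i) c))))"
        using i nth[OF i(1)] nth[of "(i + 1) mod p"] p0 nxt[of i] by simp
      moreover have "(fb ^^ i) c \<in> fcycle G R f c" unfolding fcycle_def by blast
      ultimately show "a \<in> cyc L c" unfolding cyc_def by blast
    qed
  qed
  have sub: "cyc L c \<subseteq> garcs G R gsel f"
  proof
    fix a assume "a \<in> cyc L c"
    then obtain w where w: "w \<in> fcycle G R f c" "a = ((w, L w), (fb w, L (fb w)))"
      unfolding cyc_def by blast
    have wR: "w \<in> R" using fcyc_R[OF c w(1)] .
    have v1: "(w, L w) \<in> gverts G R" using fol_cent[OF Lf wR] wR by (simp add: gverts_def)
    have v2: "(fb w, L (fb w)) \<in> gverts G R" using fol_cent[OF Lf fb_R[OF wR]] fb_R[OF wR] by (simp add: gverts_def)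
    show "a \<in> garcs G R gsel f" unfolding w(2) arc_iff using v1 v2 fixE[OF wR] by simp
  qed
  have dc: "dcycle (garcs G R gsel f) (cyc L c)"
    unfolding dcycle_def using sub vsne dist seteq by blast
  have sh: "short (cyc L c)"
    unfolding short_def cverts_def cyc_fst by auto
  have vv: "\<forall>v\<in>cverts (cyc L c). fst v \<in> fcycle G R f c"
    unfolding cverts_def cyc_fst by auto
  show ?thesis unfolding short_cycles_on_def using dc sh vv by blast
qed

end



context ctxf begin

lemma D_sub: "D \<in> short_cycles_on G R gsel f c \<Longrightarrow> D \<subseteq> garcs G R gsel f"
  by (simp add: short_cycles_on_def dcycle_def)

lemma D_tgt: assumes D: "D \<in> short_cycles_on G R gsel f c" and vu: "(v, u) \<in> D"
  shows "u \<in> fst ` D"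
proof -
  obtain vs where vs: "vs \<noteq> []" "D = {(vs ! i, vs ! ((i + 1) mod length vs)) | i. i < length vs}"
    using D by (auto simp: short_cycles_on_def dcycle_def)
  then obtain i where i: "i < length vs" "v = vs ! i" "u = vs ! ((i + 1) mod length vs)" using vu by auto
  define j where "j = (i + 1) mod length vs"
  have j: "j < length vs" using vs(1) j_def by simp
  have "(vs ! j, vs ! ((j + 1) mod length vs)) \<in> D" using vs(2) j by blast
  then have "vs ! j \<in> fst ` D" by (metis fst_conv image_eqI)
  then show ?thesis using i j_def by simp
qed

lemma D_ne: assumes D: "D \<in> short_cycles_on G R gsel f c" shows "D \<noteq> {}"
proof -
  obtain vs where vs: "vs \<noteq> []" "D = {(vs ! i, vs ! ((i + 1) mod length vs)) | i. i < length vs}"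
    using D by (auto simp: short_cycles_on_def dcycle_def)
  have "(vs ! 0, vs ! ((0 + 1) mod length vs)) \<in> D" using vs by auto
  then show ?thesis by blast
qed

lemma D_short: assumes D: "D \<in> short_cycles_on G R gsel f c"
  and "(w, l) \<in> fst ` D" "(w, l') \<in> fst ` D" shows "l = l'"
proof -
  have "short D" using D by (simp add: short_cycles_on_def)
  then have "\<forall>u\<in>fst ` D. \<forall>v\<in>fst ` D. fst u = fst v \<longrightarrow> u = v" by (simp add: short_def cverts_def)
  then show ?thesis using assms(2,3) by fastforce
qed

lemma D_fc: assumes D: "D \<in> short_cycles_on G R gsel f c" and "(w, l) \<in> fst ` D"
  shows "w \<in> fcycle G R f c"
  using assms by (auto simp: short_cycles_on_def cverts_def)

lemma D_arc: assumes D: "D \<in> short_cycles_on G R gsel f c" and a: "((z, l), u) \<in> D"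
  shows "u = (fb z, E z l) \<and> z \<in> R \<and> l \<in> centr G (stab G z) \<and> (fb z, E z l) \<in> gverts G R"
proof -
  obtain x k where u: "u = (x, k)" by (cases u)
  have "((z, l), (x, k)) \<in> garcs G R gsel f" using D_sub[OF D] a u by blast
  then show ?thesis unfolding arc_iff using u by (auto simp: gverts_def)
qed

lemma D_cover: assumes c: "c \<in> R" and D: "D \<in> short_cycles_on G R gsel f c"
  and w: "w \<in> fcycle G R f c" shows "\<exists>l. (w, l) \<in> fst ` D"
proof -
  obtain a where a: "a \<in> D" using D_ne[OF D] by blast
  obtain w0 l0 u0 where a': "a = ((w0, l0), u0)" by (metis prod.collapse)
  have v0: "(w0, l0) \<in> fst ` D" using a a' by (metis fst_conv image_eqI)
  have w0: "w0 \<in> fcycle G R f c" using D_fc[OF D v0] .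
  have step: "\<exists>l. ((fb ^^ n) w0, l) \<in> fst ` D" for n
  proof (induct n)
    case 0 then show ?case using v0 by auto
  next
    case (Suc n)
    then obtain l where l: "((fb ^^ n) w0, l) \<in> fst ` D" by blast
    then obtain u where u: "(((fb ^^ n) w0, l), u) \<in> D" by force
    have "u = (fb ((fb ^^ n) w0), E ((fb ^^ n) w0) l)" using D_arc[OF D u] by blast
    moreover have "u \<in> fst ` D" using D_tgt[OF D u] .
    ultimately show ?case by auto
  qed
  have "w \<in> fcycle G R f w0" using fcyc_sub[OF c w0] w by blast
  then obtain n where "w = (fb ^^ n) w0" by (auto simp: fcycle_def)
  then show ?thesis using step by simp
qed

end



context ctxf begin

lemma bij_main: assumes C: "cycle_reps G R f C"
  shows "\<exists>\<phi>. bij_betw \<phi> (fixset G R gsel f) (\<Pi>\<^sub>E c\<in>C. short_cycles_on G R gsel f c)"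
proof -
  have CR: "C \<subseteq> R" using C by (simp add: cycle_reps_def)
  have cu: "\<exists>!c. c \<in> C \<and> w \<in> fcycle G R f c" if "w \<in> R" for w
    using C that by (simp add: cycle_reps_def)
  define cof where "cof w = (THE c. c \<in> C \<and> w \<in> fcycle G R f c)" for w
  have cof: "cof w \<in> C \<and> w \<in> fcycle G R f (cof w)" if "w \<in> R" for w
    unfolding cof_def by (rule theI'[OF cu[OF that]])
  have cof_eq: "cof w = c" if "w \<in> R" "c \<in> C" "w \<in> fcycle G R f c" for w c
    unfolding cof_def using the1_equality[OF cu[OF that(1)]] that by blast
  have CR': "c \<in> R" if "c \<in> C" for c using CR that by (rule subsetD)
  define psi where "psi T = (\<lambda>w\<in>R. THE l. (w, l) \<in> fst ` T (cof w))" for T :: "'a \<Rightarrow> (('a \<times> ('a \<Rightarrow> 'a)) \<times> ('a \<times> ('a \<Rightarrow> 'a))) set"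
  have TD: "T c \<in> short_cycles_on G R gsel f c"
    if "T \<in> (\<Pi>\<^sub>E c\<in>C. short_cycles_on G R gsel f c)" "c \<in> C" for T c
    using that by (simp add: PiE_iff)
  have psi_in: "(w, psi T w) \<in> fst ` T (cof w)"
    if T: "T \<in> (\<Pi>\<^sub>E c\<in>C. short_cycles_on G R gsel f c)" and w: "w \<in> R" for T w
  proof -
    have cw: "cof w \<in> C" "w \<in> fcycle G R f (cof w)" using cof[OF w] by auto
    have D: "T (cof w) \<in> short_cycles_on G R gsel f (cof w)" using TD[OF T cw(1)] .
    have ex: "\<exists>!l. (w, l) \<in> fst ` T (cof w)"
      using D_cover[OF CR'[OF cw(1)] D cw(2)] D_short[OF D] by blast
    show ?thesis unfolding psi_def using theI'[OF ex] w by simp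
  qed
  define phi where "phi L = (\<lambda>c\<in>C. cyc L c)" for L
  have "bij_betw phi (fixset G R gsel f) (\<Pi>\<^sub>E c\<in>C. short_cycles_on G R gsel f c)"
  proof (rule bij_betw_byWitness[where f' = psi])
    show "\<forall>L\<in>fixset G R gsel f. psi (phi L) = L"
    proof
      fix L assume L: "L \<in> fixset G R gsel f"
      have Lf: "L \<in> folders G R" using L by (simp add: fixset_def)
      show "psi (phi L) = L"
      proof
        fix w show "psi (phi L) w = L w"
        proof (cases "w \<in> R")
          case True
          have cw: "cof w \<in> C" "w \<in> fcycle G R f (cof w)" using cof[OF True] by auto
          have "(THE l. (w, l) \<in> fst ` cyc L (cof w)) = L w"
          proof (rule the_equality)
            show "(w, L w) \<in> fst ` cyc L (cof w)" unfolding cyc_fst using cw by blast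
            show "\<And>l. (w, l) \<in> fst ` cyc L (cof w) \<Longrightarrow> l = L w" unfolding cyc_fst by blast
          qed
          then show ?thesis unfolding psi_def phi_def using True cw by simp
        next
          case False
          have "L w = undefined" using PiE_arb[OF Lf[unfolded folders_def] False] .
          then show ?thesis using False by (simp add: psi_def)
        qed
      qed
    qed
    show "phi ` fixset G R gsel f \<subseteq> (\<Pi>\<^sub>E c\<in>C. short_cycles_on G R gsel f c)"
    proof
      fix a assume "a \<in> phi ` fixset G R gsel f"
      then obtain L where L: "L \<in> fixset G R gsel f" "a = phi L" by blast
      have "\<forall>c\<in>C. cyc L c \<in> short_cycles_on G R gsel f c" using cyc_short[OF L(1) CR'] by blast
      then show "a \<in> (\<Pi>\<^sub>E c\<in>C. short_cycles_on G R gsel f c)" unfolding L(2) phi_def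
        by (simp add: restrict_PiE_iff)
    qed
    show "psi ` (\<Pi>\<^sub>E c\<in>C. short_cycles_on G R gsel f c) \<subseteq> fixset G R gsel f"
    proof
      fix a assume "a \<in> psi ` (\<Pi>\<^sub>E c\<in>C. short_cycles_on G R gsel f c)"
      then obtain T where T: "T \<in> (\<Pi>\<^sub>E c\<in>C. short_cycles_on G R gsel f c)" "a = psi T" by blast
      have cent: "psi T w \<in> centr G (stab G w)" if w: "w \<in> R" for w
      proof -
        have cw: "cof w \<in> C" using cof[OF w] by auto
        obtain u where "((w, psi T w), u) \<in> T (cof w)" using psi_in[OF T(1) w] by force
        then show ?thesis using D_arc[OF TD[OF T(1) cw]] by blast
      qed
      have Lf: "psi T \<in> folders G R" unfolding folders_def psi_def
        using cent unfolding psi_def by (simp add: restrict_PiE_iff)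
      have "\<forall>z\<in>R. psi T (fb z) = E z (psi T z)"
      proof
        fix z assume z: "z \<in> R"
        have cz: "cof z \<in> C" "z \<in> fcycle G R f (cof z)" using cof[OF z] by auto
        define D where "D = T (cof z)"
        have D: "D \<in> short_cycles_on G R gsel f (cof z)" using TD[OF T(1) cz(1)] D_def by simp
        obtain u where u: "((z, psi T z), u) \<in> D" using psi_in[OF T(1) z] D_def by force
        have uu: "u = (fb z, E z (psi T z))" using D_arc[OF D u] by blast
        have u1: "(fb z, E z (psi T z)) \<in> fst ` D" using D_tgt[OF D u] uu by simp
        have fz: "fb z \<in> fcycle G R f (cof z)" using fcyc_step[OF cz(2)] .
        have "cof (fb z) = cof z" using cof_eq[OF fb_R[OF z] cz(1) fz] .
        then have u2: "(fb z, psi T (fb z)) \<in> fst ` D" using psi_in[OF T(1) fb_R[OF z]] D_def by simp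
        show "psi T (fb z) = E z (psi T z)" using D_short[OF D u2 u1] .
      qed
      then show "a \<in> fixset G R gsel f" using fix_iff[OF Lf] Lf T(2) by (simp add: fixset_def)
    qed
    show "\<forall>T\<in>(\<Pi>\<^sub>E c\<in>C. short_cycles_on G R gsel f c). phi (psi T) = T"
    proof
      fix T assume T: "T \<in> (\<Pi>\<^sub>E c\<in>C. short_cycles_on G R gsel f c)"
      show "phi (psi T) = T"
      proof
        fix c show "phi (psi T) c = T c"
        proof (cases "c \<in> C")
          case False
          have "T c = undefined" using PiE_arb[OF T False] .
          then show ?thesis using False by (simp add: phi_def)
        next
          case True
          define D where "D = T c"
          define L where "L = psi T"
          have D: "D \<in> short_cycles_on G R gsel f c" using TD[OF T True] D_def by simp
          have c: "c \<in> R" using CR'[OF True] .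
          have key: "(w, L w) \<in> fst ` D" if w: "w \<in> fcycle G R f c" for w
          proof -
            have wR: "w \<in> R" using fcyc_R[OF c w] .
            have "cof w = c" using cof_eq[OF wR True w] .
            then show ?thesis using psi_in[OF T wR] D_def L_def by simp
          qed
          have arcD: "((w, L w), (fb w, L (fb w))) \<in> D" if w: "w \<in> fcycle G R f c" for w
          proof -
            obtain u where u: "((w, L w), u) \<in> D" using key[OF w] by force
            have uu: "u = (fb w, E w (L w))" using D_arc[OF D u] by blast
            have u1: "(fb w, E w (L w)) \<in> fst ` D" using D_tgt[OF D u] uu by simp
            have u2: "(fb w, L (fb w)) \<in> fst ` D" using key[OF fcyc_step[OF w]] .
            have "E w (L w) = L (fb w)" using D_short[OF D u1 u2] .
            then show ?thesis using u uu by simp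
          qed
          have "cyc L c = D"
          proof
            show "cyc L c \<subseteq> D" unfolding cyc_def using arcD by blast
            show "D \<subseteq> cyc L c"
            proof
              fix a assume a: "a \<in> D"
              obtain w l u where a': "a = ((w, l), u)" by (metis prod.collapse)
              have v: "(w, l) \<in> fst ` D" using a a' by (metis fst_conv image_eqI)
              have w: "w \<in> fcycle G R f c" using D_fc[OF D v] .
              have l: "l = L w" using D_short[OF D v key[OF w]] .
              have "u = (fb w, E w l)" using D_arc[OF D] a a' by blast
              moreover have "(fb w, L (fb w)) = (fb w, E w (L w))"
                using D_arc[OF D arcD[OF w]] by blast
              ultimately have "a = ((w, L w), (fb w, L (fb w)))" using a' l by simp
              then show "a \<in> cyc L c" unfolding cyc_def using w by blast
            qed
          qed
          then show ?thesis using True D_def L_def by (simp add: phi_def)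
        qed
      qed
    qed
  qed
  then show ?thesis by blast
qed

end

theorem theorem5p4:
  fixes X :: "'a set" and G :: "('a \<Rightarrow> 'a) set" and R :: "'a set"
    and gsel :: "'a \<Rightarrow> ('a \<Rightarrow> 'a)" and Cyc :: "('a \<Rightarrow> 'a) \<Rightarrow> 'a set"
  assumes "finite X"
    and "perm_group X G"
    and "orbit_reps X G R"
    and "\<forall>y\<in>X. gsel y \<in> G \<and> gsel y (repr G R y) = y"
    and "\<forall>f\<in>normalizer X G. cycle_reps G R f (Cyc f)"
  shows "(\<forall>f\<in>normalizer X G. \<forall>C. cycle_reps G R f C \<longrightarrow>
            (\<exists>\<phi>. bij_betw \<phi> (fixset G R gsel f)
                   (\<Pi>\<^sub>E x\<in>C. short_cycles_on G R gsel f x)))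
       \<and> real (card (fol_orbits G R gsel (normalizer X G)))
           = (\<Sum>f\<in>normalizer X G. real (card (fixset G R gsel f))) / real (card (normalizer X G))
       \<and> real (card (fol_orbits G R gsel (normalizer X G)))
           = (\<Sum>f\<in>normalizer X G. real (\<Prod>x\<in>Cyc f. gamma_r G R gsel f x))
               / real (card (normalizer X G))"
proof -
  interpret ctx X G R gsel using assms(1-4) by (unfold_locales)
  have cf: "ctxf X G R gsel f" if f: "f \<in> normalizer X G" for f
    using ctx_axioms f by (simp add: ctxf_def ctxf_axioms_def)
  have p1: "\<forall>f\<in>normalizer X G. \<forall>C. cycle_reps G R f C \<longrightarrow>
            (\<exists>\<phi>. bij_betw \<phi> (fixset G R gsel f) (\<Pi>\<^sub>E x\<in>C. short_cycles_on G R gsel f x))"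
    using ctxf.bij_main[OF cf] by blast
  have p2: "real (card (fol_orbits G R gsel (normalizer X G)))
           = (\<Sum>f\<in>normalizer X G. real (card (fixset G R gsel f))) / real (card (normalizer X G))"
    by (rule burnside_part)
  have fR: "finite R" using finite_subset[OF R_X assms(1)] .
  have eq: "card (fixset G R gsel f) = (\<Prod>x\<in>Cyc f. gamma_r G R gsel f x)"
    if f: "f \<in> normalizer X G" for f
  proof -
    have C: "cycle_reps G R f (Cyc f)" using assms(5) f by blast
    obtain \<phi> where "bij_betw \<phi> (fixset G R gsel f) (\<Pi>\<^sub>E x\<in>Cyc f. short_cycles_on G R gsel f x)"
      using ctxf.bij_main[OF cf[OF f] C] by blast
    then have "card (fixset G R gsel f) = card (\<Pi>\<^sub>E x\<in>Cyc f. short_cycles_on G R gsel f x)"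
      by (rule bij_betw_same_card)
    also have "\<dots> = (\<Prod>x\<in>Cyc f. card (short_cycles_on G R gsel f x))"
    proof (rule card_PiE)
      have "Cyc f \<subseteq> R" using C by (simp add: cycle_reps_def)
      then show "finite (Cyc f)" using finite_subset fR by blast
    qed
    finally show ?thesis by (simp add: gamma_r_def)
  qed
  have "(\<Sum>f\<in>normalizer X G. real (card (fixset G R gsel f)))
      = (\<Sum>f\<in>normalizer X G. real (\<Prod>x\<in>Cyc f. gamma_r G R gsel f x))"
    using eq by (intro sum.cong) auto
  then show ?thesis using p1 p2 by simp
qed

end
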